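(* Let $\tau\in\mathbb{R}\setminus\mathbb{Q}$ and let $\bar\varphi\in\mathbb{T}$, and put $\bar\varphi'=R_{1/2}\bar\varphi$. Then there exist a Cantor set $C\subset\mathbb{T}$ with $R_{1/2}C=C$ and a Cantor function $\mathcal{P}:\mathbb{T}\to\mathbb{T}$ associated to $C$ such that: (a) $\mathcal{P}(A)=\{\overline{\varphi+n\tau}: n\in\mathbb{Z}\}\cup\{\overline{\varphi'+n\tau}: n\in\mathbb{Z}\}$, where $A$ is the set of accessible points of $C$; (b) $\mathcal{P}$ is $\mathbb{Z}_2$-equivariant, i.e. $\mathcal{P}\circ R_{1/2}=R_{1/2}\circ\mathcal{P}$.
   Context: $\mathbb{T}=\mathbb{R}/\mathbb{Z}$ with points $\bar\theta=\theta+\mathbb{Z}$; the rotation $R_{\bar\eta}:\mathbb{T}\to\mathbb{T}$ is $R_{\bar\eta}(\bar\theta)=\overline{\theta+\eta}$ (written $R_\eta$ for $\eta\in\mathbb{R}$). A Cantor set is a compact, totally disconnected, perfect subset $C\subset\mathbb{T}$; it can be written $C=\mathbb{T}\setminus\bigcup_{k\ge0}\dot\alpha_k$ where $\{\alpha_k\}$ are pairwise disjoint closed arcs (the closures of the gaps) and $\dot\alpha_k$ their interiors. The accessible set $A$ of $C$ is the set of endpoints of all the arcs $\alpha_k$. Define $\bar\theta_1\sim\bar\theta_2$ if $\bar\theta_1=\bar\theta_2$ or both lie in the same $\alpha_k$. A Cantor function associated to $C$ is a continuous, cyclic-order-preserving (degree one, monotone) map $\mathcal{P}:\mathbb{T}\to\mathbb{T}$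 with $\mathcal{P}(\bar\theta_1)=\mathcal{P}(\bar\theta_2)$ if and only if $\bar\theta_1\sim\bar\theta_2$. A map $g:\mathbb{T}\to\mathbb{T}$ is $\mathbb{Z}_m$-equivariant if $g(\bar\theta+\tfrac1m)=g(\bar\theta)+\tfrac1m$ for all $\bar\theta\in\mathbb{T}$. *)

theory Defs
  imports "HOL-Analysis.Analysis"
begin

text \<open>A subset of T is represented by its (1-periodic) preimage in R, a point of T
  by any real representative, and a continuous degree-one monotone
  (cyclic-order-preserving) circle map by a lift F : R -> R which is
  continuous, nondecreasing and satisfies F (x + 1) = F x + 1.
  Two reals represent the same point of T iff their difference is an integer.\<close>

definition periodic_set :: "real set \<Rightarrow> bool" where
  "periodic_set C \<longleftrightarrow> (\<forall>x. x \<in> C \<longleftrightarrow> x + 1 \<in> C)"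

definition totally_disconnected_set :: "real set \<Rightarrow> bool" where
  "totally_disconnected_set C \<longleftrightarrow> (\<forall>S. S \<subseteq> C \<and> connected S \<longrightarrow> (\<exists>a. S \<subseteq> {a}))"

text \<open>Cantor set in T (lifted): nonempty, compact (= closed periodic lift),
  totally disconnected and perfect.\<close>
definition cantor_set :: "real set \<Rightarrow> bool" where
  "cantor_set C \<longleftrightarrow> C \<noteq> {} \<and> periodic_set C \<and> closed C \<and>
     totally_disconnected_set C \<and> (\<forall>x\<in>C. x islimpt C)"

definition gap_arc :: "real set \<Rightarrow> real \<Rightarrow> real \<Rightarrow> bool" where
  "gap_arc C a b \<longleftrightarrow> a < b \<and> a \<in> C \<and> b \<in> C \<and> {a<..<b} \<inter> C = {}"

definition accessible :: "real set \<Rightarrow> real set" where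
  "accessible C = {x. \<exists>a b. gap_arc C a b \<and> (x = a \<or> x = b)}"

definition gap_equiv :: "real set \<Rightarrow> real \<Rightarrow> real \<Rightarrow> bool" where
  "gap_equiv C x y \<longleftrightarrow> x - y \<in> \<int> \<or>
     (\<exists>a b. gap_arc C a b \<and> (\<exists>n::int. x + of_int n \<in> {a..b}) \<and> (\<exists>m::int. y + of_int m \<in> {a..b}))"

definition circle_monotone_lift :: "(real \<Rightarrow> real) \<Rightarrow> bool" where
  "circle_monotone_lift F \<longleftrightarrow> continuous_on UNIV F \<and> mono F \<and> (\<forall>x. F (x + 1) = F x + 1)"

definition cantor_function :: "real set \<Rightarrow> (real \<Rightarrow> real) \<Rightarrow> bool" where
  "cantor_function C F \<longleftrightarrow> circle_monotone_lift F \<and>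
     (\<forall>x y. F x - F y \<in> \<int> \<longleftrightarrow> gap_equiv C x y)"

end

theory Submission imports Defs begin

definition zi :: "nat \<Rightarrow> int" where
  "zi k = (if even k then int (k div 2) else - int ((k+1) div 2))"

lemma zi_surj: "\<exists>k. zi k = n"
proof (cases "n \<ge> 0")
  case True
  then show ?thesis by (intro exI[of _ "2 * nat n"]) (simp add: zi_def)
next
  case False
  then show ?thesis by (intro exI[of _ "2 * nat (-n) - 1"]) (auto simp: zi_def)
qed

lemma summable_bound:
  fixes a :: "nat \<Rightarrow> real"
  assumes "\<And>k. \<bar>a k\<bar> \<le> (1/2)^k * B"
  shows "summable a"
proof (rule summable_comparison_test)
  show "\<exists>N. \<forall>n\<ge>N. norm (a n) \<le> (1/2)^n * B" using assms by auto
  show "summable (\<lambda>n. (1/2::real)^n * B)"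
    by (intro summable_mult2 summable_geometric) simp
qed

lemma geom_half: "(\<Sum>k. (1/2::real)^k) = 2"
  using suminf_geometric[of "1/2::real"] by simp

lemma summable_half: "summable (\<lambda>k. (1/2::real)^k)"
  by (intro summable_geometric) simp

locale cz =
  fixes \<tau> \<phi> :: real
begin

definition c :: "nat \<Rightarrow> real" where "c k = \<phi> + of_int (zi k) * \<tau>"

definition D :: "real set" where "D = {\<phi> + of_int n * \<tau> + of_int j / 2 | n j. True}"

definition tm :: "nat \<Rightarrow> real \<Rightarrow> real" where
  "tm k y = (1/2)^k * real_of_int (\<lceil>2*(y - c k)\<rceil> - \<lceil>-2 * c k\<rceil>)"

definition tp :: "nat \<Rightarrow> real \<Rightarrow> real" where
  "tp k y = (1/2)^k * real_of_int (\<lfloor>2*(y - c k)\<rfloor> + 1 - \<lceil>-2 * c k\<rceil>)"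

definition G :: "real \<Rightarrow> real" where "G y = (y + (\<Sum>k. tm k y)) / 5"
definition Gp :: "real \<Rightarrow> real" where "Gp y = (y + (\<Sum>k. tp k y)) / 5"

lemma tm_bound: "\<bar>tm k y\<bar> \<le> (1/2)^k * (2*\<bar>y\<bar> + 2)"
proof -
  have a: "\<bar>real_of_int (\<lceil>2*(y - c k)\<rceil> - \<lceil>-2 * c k\<rceil>)\<bar> \<le> 2*\<bar>y\<bar> + 2"
    using ceiling_correct[of "2*(y - c k)"] ceiling_correct[of "-2 * c k"] by (simp add: abs_le_iff) linarith
  show ?thesis unfolding tm_def abs_mult using mult_left_mono[OF a, of "(1/2::real)^k"] by simp
qed

lemma tp_bound: "\<bar>tp k y\<bar> \<le> (1/2)^k * (2*\<bar>y\<bar> + 2)"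
proof -
  have a: "\<bar>real_of_int (\<lfloor>2*(y - c k)\<rfloor> + 1 - \<lceil>-2 * c k\<rceil>)\<bar> \<le> 2*\<bar>y\<bar> + 2"
    using floor_correct[of "2*(y - c k)"] ceiling_correct[of "-2 * c k"] by (simp add: abs_le_iff) linarith
  show ?thesis unfolding tp_def abs_mult using mult_left_mono[OF a, of "(1/2::real)^k"] by simp
qed

lemma summable_tm: "summable (\<lambda>k. tm k y)" by (rule summable_bound[OF tm_bound])
lemma summable_tp: "summable (\<lambda>k. tp k y)" by (rule summable_bound[OF tp_bound])

lemma tm_shift: "tm k (y + of_int j / 2) = tm k y + of_int j * (1/2)^k"
proof -
  have e: "2*(y + of_int j / 2 - c k) = 2*(y - c k) + of_int j" by (simp add: algebra_simps)
  show ?thesis unfolding tm_def e ceiling_add_of_int by (simp add: algebra_simps)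
qed

lemma tp_shift: "tp k (y + of_int j / 2) = tp k y + of_int j * (1/2)^k"
proof -
  have e: "2*(y + of_int j / 2 - c k) = 2*(y - c k) + of_int j" by (simp add: algebra_simps)
  show ?thesis unfolding tp_def e floor_add_int[symmetric] by (simp add: algebra_simps)
qed

lemma G_shift: "G (y + of_int j / 2) = G y + of_int j / 2"
proof -
  have "(\<Sum>k. tm k (y + of_int j / 2)) = (\<Sum>k. tm k y) + of_int j * 2"
    unfolding tm_shift
    by (subst suminf_add[symmetric]) (auto simp: summable_tm summable_half suminf_mult geom_half)
  then show ?thesis unfolding G_def by (simp add: field_simps)
qed

lemma Gp_shift: "Gp (y + of_int j / 2) = Gp y + of_int j / 2"
proof -
  have "(\<Sum>k. tp k (y + of_int j / 2)) = (\<Sum>k. tp k y) + of_int j * 2"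
    unfolding tp_shift
    by (subst suminf_add[symmetric]) (auto simp: summable_tp summable_half suminf_mult geom_half)
  then show ?thesis unfolding Gp_def by (simp add: field_simps)
qed

lemma tm_mono: "y \<le> z \<Longrightarrow> tm k y \<le> tm k z"
  unfolding tm_def by (intro mult_left_mono) (auto intro: ceiling_mono)

lemma tp_tm: "y < z \<Longrightarrow> tp k y \<le> tm k z"
proof -
  assume "y < z"
  have "\<lfloor>2*(y - c k)\<rfloor> < \<lceil>2*(z - c k)\<rceil>"
  proof -
    have "real_of_int \<lfloor>2*(y - c k)\<rfloor> < real_of_int \<lceil>2*(z - c k)\<rceil>"
    proof -
      have "2*(y - c k) < 2*(z - c k)" using \<open>y < z\<close> by simp
      then show ?thesis using of_int_floor_le[of "2*(y - c k)"] le_of_int_ceiling[of "2*(z - c k)"] by linarith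
    qed
    then show ?thesis by (simp only: of_int_less_iff)
  qed
  then show ?thesis unfolding tp_def tm_def by (intro mult_left_mono) auto
qed

lemma tm_tp: "tm k y \<le> tp k y"
proof -
  have "\<lceil>2*(y - c k)\<rceil> \<le> \<lfloor>2*(y - c k)\<rfloor> + 1"
    unfolding ceiling_le_iff using floor_correct[of "2*(y - c k)"] by simp
  then show ?thesis unfolding tm_def tp_def by (intro mult_left_mono) auto
qed

lemma G_strict: "y < z \<Longrightarrow> G y < G z"
  unfolding G_def using suminf_le[OF tm_mono summable_tm summable_tm, of y z] by simp

lemma G_mono: assumes "y \<le> z" shows "G y \<le> G z"
  using G_strict[of y z] assms by (cases "y = z") auto

lemma Gp_G: "y < z \<Longrightarrow> Gp y < G z"
  unfolding G_def Gp_def using suminf_le[OF tp_tm summable_tp summable_tm, of y z] by simp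

lemma G_Gp: "G y \<le> Gp y"
  unfolding G_def Gp_def using suminf_le[OF tm_tp summable_tm summable_tp, of y] by simp

lemma notD_eq: assumes "y \<notin> D" shows "Gp y = G y"
proof -
  have "tp k y = tm k y" for k
  proof -
    have "2*(y - c k) \<notin> \<int>"
    proof
      assume "2*(y - c k) \<in> \<int>"
      then obtain j where j: "2*(y - c k) = of_int j" by (auto elim: Ints_cases)
      then have "y = \<phi> + of_int (zi k) * \<tau> + of_int j / 2" unfolding c_def by (simp add: field_simps)
      then show False using assms unfolding D_def by blast
    qed
    then have "\<lceil>2*(y - c k)\<rceil> = \<lfloor>2*(y - c k)\<rfloor> + 1"
    proof -
      have ne: "real_of_int \<lfloor>2*(y - c k)\<rfloor> \<noteq> 2*(y - c k)" using \<open>2*(y - c k) \<notin> \<int>\<close> by (metis Ints_of_int)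
      have "real_of_int \<lfloor>2*(y - c k)\<rfloor> < 2*(y - c k)"
        using of_int_floor_le[of "2*(y - c k)"] ne by (auto simp: less_le)
      then have h1: "real_of_int (\<lfloor>2*(y - c k)\<rfloor> + 1) - 1 < 2*(y - c k)" by simp
      have h2: "2*(y - c k) \<le> real_of_int (\<lfloor>2*(y - c k)\<rfloor> + 1)" using floor_correct[of "2*(y - c k)"] by simp
      show ?thesis by (rule ceiling_unique[OF h1 h2])
    qed
    then show ?thesis unfolding tm_def tp_def by simp
  qed
  then show ?thesis unfolding G_def Gp_def by simp
qed

lemma D_lt: assumes "y \<in> D" shows "G y < Gp y"
proof -
  obtain n j where y: "y = \<phi> + of_int n * \<tau> + of_int j / 2" using assms unfolding D_def by blast
  obtain k where k: "zi k = n" using zi_surj by blast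
  have "2*(y - c k) = of_int j" unfolding y c_def k by (simp add: field_simps)
  then have "tm k y < tp k y" unfolding tm_def tp_def by simp
  have "0 < (\<Sum>i. tp i y - tm i y)"
  proof (subst suminf_pos_iff)
    show "summable (\<lambda>i. tp i y - tm i y)" by (rule summable_diff[OF summable_tp summable_tm])
    show "0 \<le> tp i y - tm i y" for i using tm_tp[of i y] by simp
    show "\<exists>i. 0 < tp i y - tm i y" using \<open>tm k y < tp k y\<close> by auto
  qed
  then show ?thesis unfolding G_def Gp_def
    using suminf_diff[OF summable_tp[of y] summable_tm[of y]] by simp
qed

end
context cz begin

lemma ceil_left: "eventually (\<lambda>z. \<lceil>2*(z - a)\<rceil> = \<lceil>2*(t - a)\<rceil>) (at_left (t::real))"
proof -
  define s where "s = 2*(t - a)"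
  define d where "d = (s - (of_int \<lceil>s\<rceil> - 1))/2"
  have "d > 0" unfolding d_def using ceiling_correct[of s] by simp
  have "eventually (\<lambda>z. z \<in> {t - d<..<t}) (at_left t)" by (rule eventually_at_left_real) (simp add: \<open>d > 0\<close>)
  then show ?thesis
  proof (rule eventually_mono)
    fix z assume z: "z \<in> {t - d<..<t}"
    have h1: "of_int \<lceil>s\<rceil> - 1 < 2*(z - a)" using z unfolding d_def s_def by (simp add: field_simps)
    have "z < t" using z by simp
    have "2*(z - a) < 2*(t - a)" using \<open>z < t\<close> by simp
    then have h2: "2*(z - a) \<le> of_int \<lceil>s\<rceil>" using le_of_int_ceiling[of s] unfolding s_def by linarith
    show "\<lceil>2*(z - a)\<rceil> = \<lceil>2*(t - a)\<rceil>" using ceiling_unique[OF h1 h2] unfolding s_def by simp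
  qed
qed

lemma ceil_right: "eventually (\<lambda>z. \<lceil>2*(z - a)\<rceil> = \<lfloor>2*(t - a)\<rfloor> + 1) (at_right (t::real))"
proof -
  define s where "s = 2*(t - a)"
  define d where "d = (of_int \<lfloor>s\<rfloor> + 1 - s)/2"
  have "d > 0" unfolding d_def using floor_correct[of s] by simp
  have "eventually (\<lambda>z. z \<in> {t<..<t + d}) (at_right t)" by (rule eventually_at_right_real) (simp add: \<open>d > 0\<close>)
  then show ?thesis
  proof (rule eventually_mono)
    fix z assume z: "z \<in> {t<..<t + d}"
    have "t < z" using z by simp
    have "2*(t - a) < 2*(z - a)" using \<open>t < z\<close> by simp
    then have "of_int \<lfloor>s\<rfloor> < 2*(z - a)" using of_int_floor_le[of s] unfolding s_def by linarith
    then have h1: "of_int (\<lfloor>s\<rfloor> + 1) - 1 < 2*(z - a)" by simp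
    have h2: "2*(z - a) \<le> of_int (\<lfloor>s\<rfloor> + 1)" using z unfolding d_def s_def by (simp add: field_simps)
    show "\<lceil>2*(z - a)\<rceil> = \<lfloor>2*(t - a)\<rfloor> + 1" using ceiling_unique[OF h1 h2] unfolding s_def by simp
  qed
qed

lemma tm_left: "((\<lambda>z. tm k z) \<longlongrightarrow> tm k t) (at_left t)"
  by (rule tendsto_eventually, rule eventually_mono[OF ceil_left[of "c k" t]]) (simp add: tm_def)

lemma tm_right: "((\<lambda>z. tm k z) \<longlongrightarrow> tp k t) (at_right t)"
  by (rule tendsto_eventually, rule eventually_mono[OF ceil_right[of "c k" t]]) (simp add: tm_def tp_def)

lemma bnd_pt: assumes "z \<in> {t-1<..<t+1}" shows "norm (tm k z) \<le> (1/2)^k * (2*(\<bar>t\<bar>+1)+2)"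
proof -
  have "2*\<bar>z\<bar> + 2 \<le> 2*(\<bar>t\<bar>+1)+2" using assms by auto
  then have A: "(1/2::real)^k * (2*\<bar>z\<bar> + 2) \<le> (1/2)^k * (2*(\<bar>t\<bar>+1)+2)" by (intro mult_left_mono) auto
  show ?thesis unfolding real_norm_def by (rule order_trans[OF tm_bound A])
qed

lemma bound_ev:
  assumes ev: "eventually (\<lambda>z. z \<in> {t-1<..<t+1}) F"
  shows "eventually (\<lambda>(k,z). norm (tm k z) \<le> (1/2)^k * (2*(\<bar>t\<bar>+1)+2)) (at_top \<times>\<^sub>F F)"
  apply (subst eventually_prod_filter)
  apply (rule exI[of _ "\<lambda>_. True"], rule exI[of _ "\<lambda>z. z \<in> {t-1<..<t+1}"])
  apply (intro conjI)
    apply simp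
   apply (rule ev)
  using bnd_pt by auto

lemma summable_M: "summable (\<lambda>k. (1/2::real)^k * (2*(\<bar>t\<bar>+1)+2))"
  by (intro summable_mult2 summable_geometric) simp

lemma lim_left: "((\<lambda>z. \<Sum>k. tm k z) \<longlongrightarrow> (\<Sum>k. tm k t)) (at_left t)"
proof -
  have "eventually (\<lambda>z. z \<in> {t-1<..<t}) (at_left t)" by (rule eventually_at_left_real) simp
  then have "eventually (\<lambda>z. z \<in> {t-1<..<t+1}) (at_left t)" by (rule eventually_mono) auto
  from tannerys_theorem[OF tm_left bound_ev[OF this] summable_M trivial_limit_at_left_real]
  show ?thesis by blast
qed

lemma lim_right: "((\<lambda>z. \<Sum>k. tm k z) \<longlongrightarrow> (\<Sum>k. tp k t)) (at_right t)"
proof -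
  have "eventually (\<lambda>z. z \<in> {t<..<t+1}) (at_right t)" by (rule eventually_at_right_real) simp
  then have "eventually (\<lambda>z. z \<in> {t-1<..<t+1}) (at_right t)" by (rule eventually_mono) auto
  from tannerys_theorem[OF tm_right bound_ev[OF this] summable_M trivial_limit_at_right_real]
  show ?thesis by blast
qed

lemma G_left: "(G \<longlongrightarrow> G t) (at_left t)"
  unfolding G_def[abs_def] by (intro tendsto_divide tendsto_add tendsto_ident_at lim_left tendsto_const) simp

lemma G_right: "(G \<longlongrightarrow> Gp t) (at_right t)"
  unfolding G_def[abs_def] Gp_def by (intro tendsto_divide tendsto_add tendsto_ident_at lim_right tendsto_const) simp

definition F :: "real \<Rightarrow> real" where "F x = Sup {y. G y \<le> x}"

lemma S_ne: "{y. G y \<le> x} \<noteq> {}"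
proof -
  define j where "j = \<lfloor>2*(x - G 0)\<rfloor>"
  have "of_int j \<le> 2*(x - G 0)" unfolding j_def by (rule of_int_floor_le)
  then have "of_int j / 2 \<le> x - G 0" by simp
  then have "G (0 + of_int j / 2) \<le> x" unfolding G_shift by simp
  then show ?thesis by blast
qed

lemma ex_above: "\<exists>y. x < G y"
proof -
  define j where "j = \<lfloor>2*(x - G 0)\<rfloor> + 1"
  have "2*(x - G 0) < of_int j" unfolding j_def of_int_add of_int_1 by (rule real_of_int_floor_add_one_gt)
  then have "x - G 0 < of_int j / 2" by simp
  then have "x < G (0 + of_int j / 2)" unfolding G_shift by simp
  then show ?thesis by blast
qed

lemma S_bdd: "bdd_above {y. G y \<le> x}"
proof -
  obtain y1 where y1: "x < G y1" using ex_above by blast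
  have "y \<le> y1" if "G y \<le> x" for y
  proof (rule ccontr)
    assume "\<not> y \<le> y1" then have "G y1 < G y" using G_strict by simp
    then show False using that y1 by simp
  qed
  then show ?thesis unfolding bdd_above_def by blast
qed

lemma F_lt: "z < F x \<Longrightarrow> G z \<le> x"
proof -
  assume "z < F x"
  then obtain s where s: "G s \<le> x" "z < s" unfolding F_def using less_cSup_iff[OF S_ne S_bdd] by auto
  then show "G z \<le> x" using G_strict[of z s] by simp
qed

lemma F_gt: "F x < z \<Longrightarrow> x < G z"
proof (rule ccontr)
  assume "F x < z" "\<not> x < G z"
  then have "z \<le> F x" unfolding F_def by (intro cSup_upper S_bdd) simp
  then show False using \<open>F x < z\<close> by simp
qed

lemma F_unique:
  assumes lt: "\<And>z. z < t \<Longrightarrow> G z \<le> x" and gt: "\<And>z. t < z \<Longrightarrow> x < G z"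
  shows "F x = t"
proof (rule ccontr)
  assume "F x \<noteq> t"
  then consider "F x < t" | "t < F x" by linarith
  then show False
  proof cases
    case 1
    define m where "m = (F x + t)/2"
    have "G m \<le> x" using lt 1 unfolding m_def by simp
    moreover have "x < G m" using F_gt 1 unfolding m_def by simp
    ultimately show False by simp
  next
    case 2
    define m where "m = (F x + t)/2"
    have "G m \<le> x" using F_lt 2 unfolding m_def by simp
    moreover have "x < G m" using gt 2 unfolding m_def by simp
    ultimately show False by simp
  qed
qed

lemma F_G: "F (G y) = y"
  by (rule F_unique) (auto intro: G_mono G_strict)

lemma F_Gp: "F (Gp y) = y"
proof (rule F_unique)
  show "G z \<le> Gp y" if "z < y" for z using G_mono[of z y] G_Gp[of y] that by simp
  show "Gp y < G z" if "y < z" for z using Gp_G that by simp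
qed

lemma F_shift: "F (x + of_int j / 2) = F x + of_int j / 2"
proof (rule F_unique)
  fix z
  have e: "G z = G (z - of_int j / 2) + of_int j / 2" using G_shift[of "z - of_int j / 2" j] by simp
  show "G z \<le> x + of_int j / 2" if "z < F x + of_int j / 2"
    using F_lt[of "z - of_int j / 2" x] that e by simp
  show "x + of_int j / 2 < G z" if "F x + of_int j / 2 < z"
    using F_gt[of x "z - of_int j / 2"] that e by simp
qed

lemma F_mono: assumes "x \<le> x'" shows "F x \<le> F x'"
proof (rule ccontr)
  assume "\<not> F x \<le> F x'"
  define m where "m = (F x + F x')/2"
  have "G m \<le> x" using F_lt \<open>\<not> F x \<le> F x'\<close> unfolding m_def by simp
  moreover have "x' < G m" using F_gt \<open>\<not> F x \<le> F x'\<close> unfolding m_def by simp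
  ultimately show False using assms by simp
qed

lemma GF_le: "G (F x) \<le> x"
proof (rule tendsto_upperbound[OF G_left _ trivial_limit_at_left_real])
  have "eventually (\<lambda>z. z \<in> {F x - 1<..<F x}) (at_left (F x))" by (rule eventually_at_left_real) simp
  then show "eventually (\<lambda>z. G z \<le> x) (at_left (F x))" by (rule eventually_mono) (auto intro: F_lt)
qed

lemma Gp_ge: "x \<le> Gp (F x)"
proof (rule tendsto_lowerbound[OF G_right _ trivial_limit_at_right_real])
  have "eventually (\<lambda>z. z \<in> {F x<..<F x + 1}) (at_right (F x))" by (rule eventually_at_right_real) simp
  then show "eventually (\<lambda>z. x \<le> G z) (at_right (F x))" by (rule eventually_mono) (auto intro: F_gt less_imp_le)
qed

lemma F_cont: "continuous_on UNIV F"
proof (rule continuous_at_imp_continuous_on, intro ballI)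
  fix x
  show "isCont F x" unfolding isCont_def
  proof (rule order_tendstoI)
    fix a assume a: "a < F x"
    define m where "m = (a + F x)/2"
    have "G m < G ((m + F x)/2)" using a unfolding m_def by (intro G_strict) simp
    also have "\<dots> \<le> x" using a unfolding m_def by (intro F_lt) simp
    finally have "G m < x" .
    then have "eventually (\<lambda>x'. G m < x') (at x)" by (rule order_tendstoD(1)[OF tendsto_ident_at])
    then show "eventually (\<lambda>x'. a < F x') (at x)"
    proof (rule eventually_mono)
      fix x' assume "G m < x'"
      then have "F (G m) \<le> F x'" by (intro F_mono) simp
      then show "a < F x'" unfolding F_G using a unfolding m_def by simp
    qed
  next
    fix a assume a: "F x < a"
    define m where "m = (a + F x)/2"
    have "x < G m" using a unfolding m_def by (intro F_gt) simp
    then have "eventually (\<lambda>x'. x' < G m) (at x)" by (rule order_tendstoD(2)[OF tendsto_ident_at])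
    then show "eventually (\<lambda>x'. F x' < a) (at x)"
    proof (rule eventually_mono)
      fix x' assume "x' < G m"
      then have "F x' \<le> F (G m)" by (intro F_mono) simp
      then show "F x' < a" unfolding F_G using a unfolding m_def by simp
    qed
  qed
qed

end
context cz begin

definition Cs :: "real set" where "Cs = - (\<Union>d\<in>D. {G d<..<Gp d})"

lemma notC: "d \<in> D \<Longrightarrow> G d < x \<Longrightarrow> x < Gp d \<Longrightarrow> x \<notin> Cs"
  unfolding Cs_def by auto

lemma inC: "x \<in> Cs \<longleftrightarrow> (\<forall>d\<in>D. \<not> (G d < x \<and> x < Gp d))"
  unfolding Cs_def by auto

lemma C_G: "G y \<in> Cs"
  unfolding inC
proof (intro ballI notI)
  fix d assume "d \<in> D" "G d < G y \<and> G y < Gp d"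
  then show False using G_strict[of y d] Gp_G[of d y] G_Gp[of y]
    by (cases "y < d"; cases "d < y") auto
qed

lemma C_Gp: "Gp y \<in> Cs"
  unfolding inC
proof (intro ballI notI)
  fix d assume "d \<in> D" "G d < Gp y \<and> Gp y < Gp d"
  then show False using Gp_G[of y d] Gp_G[of d y] G_Gp[of y]
    by (cases "y < d"; cases "d < y") auto
qed

lemma F_between: "G y \<le> x \<Longrightarrow> x \<le> Gp y \<Longrightarrow> F x = y"
  using F_mono[of "G y" x] F_mono[of x "Gp y"] F_G F_Gp by (simp add: order_antisym)

lemma C_cases: assumes "x \<in> Cs" shows "x = G (F x) \<or> x = Gp (F x)"
proof (rule ccontr)
  assume "\<not> (x = G (F x) \<or> x = Gp (F x))"
  then have a: "G (F x) < x" "x < Gp (F x)" using GF_le[of x] Gp_ge[of x] by auto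
  then have "F x \<in> D" using notD_eq[of "F x"] by fastforce
  then show False using notC[OF _ a] assms by blast
qed

lemma D_shift: "d \<in> D \<Longrightarrow> d + of_int j / 2 \<in> D"
proof -
  assume "d \<in> D"
  then obtain n i where d: "d = \<phi> + of_int n * \<tau> + of_int i / 2" unfolding D_def by blast
  have "d + of_int j / 2 = \<phi> + of_int n * \<tau> + of_int (i + j) / 2" unfolding d by (simp add: field_simps)
  then show ?thesis unfolding D_def by blast
qed

lemma C_shift: assumes "x \<in> Cs" shows "x + of_int j / 2 \<in> Cs"
  unfolding inC
proof (intro ballI notI)
  fix d assume d: "d \<in> D" "G d < x + of_int j / 2 \<and> x + of_int j / 2 < Gp d"
  have "d + of_int (-j) / 2 \<in> D" by (rule D_shift[OF d(1)])
  moreover have "G (d + of_int (-j) / 2) < x" "x < Gp (d + of_int (-j) / 2)"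
    unfolding G_shift Gp_shift using d(2) by auto
  ultimately show False using assms notC by blast
qed

lemma gap_iff: "gap_arc Cs a b \<longleftrightarrow> (\<exists>d\<in>D. a = G d \<and> b = Gp d)"
proof
  assume g: "gap_arc Cs a b"
  then have ab: "a < b" "a \<in> Cs" "b \<in> Cs" "{a<..<b} \<inter> Cs = {}" unfolding gap_arc_def by auto
  define m where "m = (a+b)/2"
  have "m \<in> {a<..<b}" using ab unfolding m_def by auto
  then have "m \<notin> Cs" using ab by blast
  then obtain d where d: "d \<in> D" "G d < m" "m < Gp d" unfolding inC by blast
  have m: "a < m" "m < b" using ab unfolding m_def by auto
  have "a = G d"
  proof (rule ccontr)
    assume "a \<noteq> G d"
    then consider "a < G d" | "G d < a" by linarith
    then show False
    proof cases
      case 1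
      then have "G d \<in> {a<..<b}" using d m by auto
      then show False using C_G ab by blast
    next
      case 2
      then show False using notC[OF d(1) 2] d m ab by auto
    qed
  qed
  moreover have "b = Gp d"
  proof (rule ccontr)
    assume "b \<noteq> Gp d"
    then consider "Gp d < b" | "b < Gp d" by linarith
    then show False
    proof cases
      case 1
      then have "Gp d \<in> {a<..<b}" using d m by auto
      then show False using C_Gp ab by blast
    next
      case 2
      then show False using notC[OF d(1) _ 2] d m ab by auto
    qed
  qed
  ultimately show "\<exists>d\<in>D. a = G d \<and> b = Gp d" using d by blast
next
  assume "\<exists>d\<in>D. a = G d \<and> b = Gp d"
  then obtain d where d: "d \<in> D" "a = G d" "b = Gp d" by blast
  show "gap_arc Cs a b" unfolding gap_arc_def d(2,3)
    using D_lt[OF d(1)] C_G C_Gp notC[OF d(1)] by auto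
qed

lemma acc: "accessible Cs = G ` D \<union> Gp ` D"
  unfolding accessible_def gap_iff by auto

lemma F_acc: "F ` accessible Cs = D"
  unfolding acc image_Un image_image F_G F_Gp by simp

lemma F_int: "F (x + of_int n) = F x + of_int n"
  using F_shift[of x "2*n"] by simp

lemma F_circle: "circle_monotone_lift F"
  unfolding circle_monotone_lift_def
  using F_cont F_shift[of _ 2] by (auto intro: monoI F_mono)

lemma gap_equiv_iff: "gap_equiv Cs x y \<longleftrightarrow> F x - F y \<in> \<int>"
proof
  assume "gap_equiv Cs x y"
  then consider "x - y \<in> \<int>" | a b n m where "gap_arc Cs a b" "x + of_int n \<in> {a..b}" "y + of_int m \<in> {a..b}"
    unfolding gap_equiv_def by blast
  then show "F x - F y \<in> \<int>"
  proof cases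
    case 1
    then obtain i where "x - y = of_int i" by (auto elim: Ints_cases)
    then have "x = y + of_int i" by simp
    then have "F x - F y = of_int i" using F_int by simp
    then show ?thesis by simp
  next
    case 2
    then obtain d where d: "d \<in> D" "a = G d" "b = Gp d" using gap_iff by blast
    have "F (x + of_int n) = d" "F (y + of_int m) = d" using 2 d by (auto intro: F_between)
    then have "F x - F y = of_int (m - n)" unfolding F_int by simp
    then show ?thesis by simp
  qed
next
  assume "F x - F y \<in> \<int>"
  then obtain i where i: "F x - F y = of_int i" by (auto elim: Ints_cases)
  define t where "t = F x"
  have ty: "F (y + of_int i) = t" unfolding t_def F_int using i by simp
  have bx: "G t \<le> x" "x \<le> Gp t" unfolding t_def using GF_le Gp_ge by auto
  have by': "G t \<le> y + of_int i" "y + of_int i \<le> Gp t" using GF_le[of "y + of_int i"] Gp_ge[of "y + of_int i"] ty by auto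
  show "gap_equiv Cs x y"
  proof (cases "t \<in> D")
    case True
    then have "gap_arc Cs (G t) (Gp t)" using gap_iff by blast
    moreover have "x + of_int 0 \<in> {G t..Gp t}" using bx by simp
    moreover have "y + of_int i \<in> {G t..Gp t}" using by' by simp
    ultimately show ?thesis unfolding gap_equiv_def by blast
  next
    case False
    then have "x = y + of_int i" using notD_eq[OF False] bx by' by simp
    then have "x - y = of_int i" by simp
    then show ?thesis unfolding gap_equiv_def by simp
  qed
qed

lemma F_cantor_function: "cantor_function Cs F"
  unfolding cantor_function_def using F_circle gap_equiv_iff by auto

lemma frac_int: "frac (x + of_int i) = frac x"
  by (simp add: frac_def)

lemma frac_D: "frac ` D = {frac (\<phi> + of_int n * \<tau>) | n. True} \<union> {frac ((\<phi> + 1/2) + of_int n * \<tau>) | n. True}"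
proof
  show "frac ` D \<subseteq> {frac (\<phi> + of_int n * \<tau>) | n. True} \<union> {frac ((\<phi> + 1/2) + of_int n * \<tau>) | n. True}"
  proof
    fix x assume "x \<in> frac ` D"
    then obtain n j where x: "x = frac (\<phi> + of_int n * \<tau> + of_int j / 2)" unfolding D_def by blast
    show "x \<in> {frac (\<phi> + of_int n * \<tau>) | n. True} \<union> {frac ((\<phi> + 1/2) + of_int n * \<tau>) | n. True}"
    proof (cases "even j")
      case True
      then obtain i where "j = 2*i" by (auto elim: evenE)
      then have "x = frac ((\<phi> + of_int n * \<tau>) + of_int i)" unfolding x by simp
      then show ?thesis unfolding frac_int by blast
    next
      case False
      then obtain i where "j = 2*i + 1" by (auto elim: oddE)
      then have e: "\<phi> + of_int n * \<tau> + of_int j / 2 = ((\<phi> + 1/2) + of_int n * \<tau>) + of_int i" by (simp add: field_simps)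
      show ?thesis unfolding x e frac_int by blast
    qed
  qed
next
  show "{frac (\<phi> + of_int n * \<tau>) | n. True} \<union> {frac ((\<phi> + 1/2) + of_int n * \<tau>) | n. True} \<subseteq> frac ` D"
  proof
    fix x assume "x \<in> {frac (\<phi> + of_int n * \<tau>) | n. True} \<union> {frac ((\<phi> + 1/2) + of_int n * \<tau>) | n. True}"
    then consider n where "x = frac (\<phi> + of_int n * \<tau>)" | n where "x = frac ((\<phi> + 1/2) + of_int n * \<tau>)" by blast
    then show "x \<in> frac ` D"
    proof cases
      case 1
      have "\<phi> + of_int n * \<tau> = \<phi> + of_int n * \<tau> + of_int 0 / 2" by simp
      then have "\<phi> + of_int n * \<tau> \<in> D" unfolding D_def by blast
      then show ?thesis using 1 by blast
    next
      case 2
      have "(\<phi> + 1/2) + of_int n * \<tau> = \<phi> + of_int n * \<tau> + of_int 1 / 2" by simp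
      then have "(\<phi> + 1/2) + of_int n * \<tau> \<in> D" unfolding D_def by blast
      then show ?thesis using 2 by blast
    qed
  qed
qed

lemma C_perfect: assumes "x \<in> Cs" shows "x islimpt Cs"
  unfolding islimpt_def
proof (intro allI impI)
  fix T assume T: "x \<in> T" "open T"
  define t where "t = F x"
  from C_cases[OF assms] consider "x = G t" | "x = Gp t" unfolding t_def by blast
  then show "\<exists>y\<in>Cs. y \<in> T \<and> y \<noteq> x"
  proof cases
    case 1
    have "eventually (\<lambda>z. G z \<in> T) (at_left t)" using topological_tendstoD[OF G_left T(2)] T(1) 1 by simp
    moreover have "eventually (\<lambda>z. z \<in> {t-1<..<t}) (at_left t)" by (rule eventually_at_left_real) simp
    ultimately have ev: "eventually (\<lambda>z. G z \<in> T \<and> z \<in> {t-1<..<t}) (at_left t)" by (rule eventually_conj)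
    obtain z where z: "G z \<in> T" "z < t" using eventually_happens[OF ev] trivial_limit_at_left_real by auto
    then show ?thesis using C_G G_strict[OF z(2)] 1 by force
  next
    case 2
    have "eventually (\<lambda>z. G z \<in> T) (at_right t)" using topological_tendstoD[OF G_right T(2)] T(1) 2 by simp
    moreover have "eventually (\<lambda>z. z \<in> {t<..<t+1}) (at_right t)" by (rule eventually_at_right_real) simp
    ultimately have ev: "eventually (\<lambda>z. G z \<in> T \<and> z \<in> {t<..<t+1}) (at_right t)" by (rule eventually_conj)
    obtain z where z: "G z \<in> T" "t < z" using eventually_happens[OF ev] trivial_limit_at_right_real by auto
    then show ?thesis using C_G Gp_G[OF z(2)] 2 by force
  qed
qed

lemma C_closed: "closed Cs"
  unfolding Cs_def by (intro closed_Compl open_UN ballI open_greaterThanLessThan)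

lemma C_periodic: "periodic_set Cs"
  unfolding periodic_set_def
proof (intro allI iffI)
  fix x
  show "x \<in> Cs \<Longrightarrow> x + 1 \<in> Cs" using C_shift[of x 2] by simp
  show "x + 1 \<in> Cs \<Longrightarrow> x \<in> Cs" using C_shift[of "x+1" "-2"] by simp
qed

lemma C_half: "x \<in> Cs \<longleftrightarrow> x + 1/2 \<in> Cs"
  using C_shift[of x 1] C_shift[of "x + 1/2" "-1"] by auto

lemma F_equiv: "F (x + 1/2) - (F x + 1/2) \<in> \<int>"
  using F_shift[of x 1] by simp

end

locale cz_irr = cz +
  assumes irr: "\<tau> \<notin> \<rat>"
begin

lemma D_dense: assumes "a < b" shows "\<exists>d\<in>D. a < d \<and> d < b"
proof -
  have e: "(b-a)/2 > 0" using assms by simp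
  obtain h k where hk: "\<bar>of_int k * \<tau> - of_int h - ((a+b)/2 - \<phi>)\<bar> < (b-a)/2"
    using sequence_of_fractional_parts_is_dense[OF irr e, of "(a+b)/2 - \<phi>"] by blast
  define d where "d = \<phi> + of_int k * \<tau> + of_int (-2*h) / 2"
  have "d \<in> D" unfolding d_def D_def by blast
  moreover have "d = \<phi> + of_int k * \<tau> - of_int h" unfolding d_def by simp
  then have "a < d \<and> d < b" using hk[unfolded abs_less_iff] by (auto simp: field_simps)
  ultimately show ?thesis by blast
qed

lemma interval_notC: assumes "p < q" shows "\<exists>x. p \<le> x \<and> x \<le> q \<and> x \<notin> Cs"
proof -
  have le: "F p \<le> F q" using F_mono assms by simp
  show ?thesis
  proof (cases "F p < F q")
    case True
    obtain d where d: "d \<in> D" "F p < d" "d < F q" using D_dense[OF True] by blast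
    define m where "m = (G d + Gp d)/2"
    have m: "G d < m" "m < Gp d" using D_lt[OF d(1)] unfolding m_def by auto
    have "p \<le> Gp (F p)" by (rule Gp_ge)
    also have "\<dots> < G d" using Gp_G d(2) by simp
    finally have "p < m" using m by simp
    have "Gp d < G (F q)" using Gp_G d(3) by simp
    also have "\<dots> \<le> q" by (rule GF_le)
    finally have "m < q" using m by simp
    show ?thesis using \<open>p < m\<close> \<open>m < q\<close> notC[OF d(1) m] by (intro exI[of _ m]) auto
  next
    case False
    then have e: "F q = F p" using le by simp
    define t where "t = F p"
    have b: "G t \<le> p" "q \<le> Gp t" unfolding t_def using GF_le[of p] Gp_ge[of q] e by auto
    then have "G t < Gp t" using assms by simp
    then have "t \<in> D" using notD_eq[of t] by fastforce
    define m where "m = (p + q)/2"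
    have m: "G t < m" "m < Gp t" using b assms unfolding m_def by auto
    show ?thesis using notC[OF \<open>t \<in> D\<close> m, unfolded m_def] assms by (intro exI[of _ "(p+q)/2"]) auto
  qed
qed

lemma C_td: "totally_disconnected_set Cs"
  unfolding totally_disconnected_set_def
proof (intro allI impI)
  fix S assume S: "S \<subseteq> Cs \<and> connected S"
  show "\<exists>a. S \<subseteq> {a}"
  proof (cases "S = {}")
    case True then show ?thesis by auto
  next
    case False
    then obtain p where p: "p \<in> S" by blast
    have "q = p" if q: "q \<in> S" for q
    proof (rule ccontr)
      assume "q \<noteq> p"
      then obtain u v where uv: "u \<in> S" "v \<in> S" "u < v" using p q by (metis linorder_neqE_linordered_idom)
      obtain x where x: "u \<le> x" "x \<le> v" "x \<notin> Cs" using interval_notC[OF uv(3)] by blast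
      have "x \<in> S" using connectedD_interval[of S u v x] S uv x by auto
      then show False using S x by auto
    qed
    then show ?thesis by blast
  qed
qed

lemma C_cantor: "cantor_set Cs"
  unfolding cantor_set_def using C_G C_periodic C_closed C_td C_perfect by auto

lemma main:
  "\<exists>C F. cantor_set C \<and> (\<forall>x. x \<in> C \<longleftrightarrow> x + 1/2 \<in> C) \<and> cantor_function C F \<and>
    frac ` F ` accessible C =
      {frac (\<phi> + of_int n * \<tau>) | n. True} \<union> {frac ((\<phi> + 1/2) + of_int n * \<tau>) | n. True} \<and>
    (\<forall>x. F (x + 1/2) - (F x + 1/2) \<in> \<int>)"
  using C_cantor C_half F_cantor_function F_acc frac_D F_equiv by metis

end

theorem lemma3p2:
  fixes \<tau> \<phi> :: real
  assumes "\<tau> \<notin> \<rat>"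
  shows "\<exists>C F. cantor_set C \<and> (\<forall>x. x \<in> C \<longleftrightarrow> x + 1/2 \<in> C) \<and> cantor_function C F \<and>
    frac ` F ` accessible C =
      {frac (\<phi> + of_int n * \<tau>) | n. True} \<union> {frac ((\<phi> + 1/2) + of_int n * \<tau>) | n. True} \<and>
    (\<forall>x. F (x + 1/2) - (F x + 1/2) \<in> \<int>)"
proof -
  interpret cz_irr \<tau> \<phi> using assms by unfold_locales
  show ?thesis by (rule main)
qed

end
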